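(* Let $F$ be a graph (2-uniform) and let $\epsilon > 0$. Then there exist $n_0$ and $\delta > 0$ (depending only on $\epsilon$ and $F$) such that the following holds. Let $V$ be a vertex set of size $n = |V| > n_0$. If $G = (V,E)$ is a graph with $|E| = \mathrm{ex}^*(n,F) + \epsilon\binom{n}{2}$ edges, then for every set of edges $E_0 \subset V^{(2)} \setminus E$ there exists a subset $X \subset E$ such that the graph $(V, E_0 \cup X)$ contains at least $\delta n^{|F|}$ induced copies of $F$.
   Context: $V^{(2)}$ denotes the set of 2-element subsets of $V$, and $|F|$ is the number of vertices of $F$. For an $n$-vertex set $V$, $\mathrm{ex}^*(n,F)$ is the maximum of $|E|$ over all graphs $G=(V,E)$ for which there exists an edge set $E_0 \subset V^{(2)}$ with $E \cap E_0 = \emptyset$ such that for every $X \subset E$ the graph $(V, E_0 \cup X)$ contains no induced subgraph isomorphic to $F$. *)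

theory Defs
  imports Complex_Main
begin

definition pairs :: "'a set \<Rightarrow> 'a set set" where
  "pairs V = {e. e \<subseteq> V \<and> card e = 2}"

definition has_induced_copy :: "'b set \<Rightarrow> 'b set set \<Rightarrow> 'a set \<Rightarrow> 'a set set \<Rightarrow> bool" where
  "has_induced_copy VF EF V E \<longleftrightarrow>
     (\<exists>f. inj_on f VF \<and> f ` VF \<subseteq> V \<and>
          (\<forall>x\<in>VF. \<forall>y\<in>VF. {x, y} \<in> EF \<longleftrightarrow> {f x, f y} \<in> E))"

definition induced_copies :: "'b set \<Rightarrow> 'b set set \<Rightarrow> 'a set \<Rightarrow> 'a set set \<Rightarrow> 'a set set" where
  "induced_copies VF EF V E =
     {S. S \<subseteq> V \<and> (\<exists>f. bij_betw f VF S \<and>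
          (\<forall>x\<in>VF. \<forall>y\<in>VF. {x, y} \<in> EF \<longleftrightarrow> {f x, f y} \<in> E))}"

text \<open>ex*(n,F), taken on the n-vertex set {0..<n} (the value only depends on n).\<close>
definition exstar :: "nat \<Rightarrow> 'b set \<Rightarrow> 'b set set \<Rightarrow> nat" where
  "exstar n VF EF = Max {card E | E. E \<subseteq> pairs {..<n} \<and>
      (\<exists>E0. E0 \<subseteq> pairs {..<n} \<and> E \<inter> E0 = {} \<and>
         (\<forall>X. X \<subseteq> E \<longrightarrow> \<not> has_induced_copy VF EF {..<n} (E0 \<union> X)))}"

end

theory Submission
  imports Defs
begin


lemma card_pairs: "finite U \<Longrightarrow> card (pairs U) = card U choose 2"
  unfolding pairs_def by (rule n_subsets)

lemma card_supersets:
  assumes "finite V" "A \<subseteq> V" "card A \<le> m"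
  shows "card {U. U \<subseteq> V \<and> card U = m \<and> A \<subseteq> U} = (card V - card A) choose (m - card A)"
proof -
  have fA: "finite A" using assms finite_subset by blast
  have eq: "{U. U \<subseteq> V \<and> card U = m \<and> A \<subseteq> U} = (\<lambda>B. B \<union> A) ` {B. B \<subseteq> V - A \<and> card B = m - card A}"
  proof (rule set_eqI, rule iffI)
    fix U assume "U \<in> {U. U \<subseteq> V \<and> card U = m \<and> A \<subseteq> U}"
    then have U: "U \<subseteq> V" "card U = m" "A \<subseteq> U" by auto
    have "finite U" using U assms finite_subset by blast
    then have "card (U - A) = m - card A" using U by (simp add: card_Diff_subset fA)
    moreover have "U = (U - A) \<union> A" using U by auto
    ultimately show "U \<in> (\<lambda>B. B \<union> A) ` {B. B \<subseteq> V - A \<and> card B = m - card A}"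
      using U by blast
  next
    fix U assume "U \<in> (\<lambda>B. B \<union> A) ` {B. B \<subseteq> V - A \<and> card B = m - card A}"
    then obtain B where B: "B \<subseteq> V - A" "card B = m - card A" "U = B \<union> A" by auto
    have "finite B" using B assms finite_subset by blast
    moreover have "B \<inter> A = {}" using B by blast
    ultimately have "card (B \<union> A) = card B + card A" using fA card_Un_disjoint by blast
    then have "card U = m" using B assms by simp
    then show "U \<in> {U. U \<subseteq> V \<and> card U = m \<and> A \<subseteq> U}" using B assms by auto
  qed
  have inj: "inj_on (\<lambda>B. B \<union> A) {B. B \<subseteq> V - A \<and> card B = m - card A}"
    by (rule inj_onI) blast
  have "card {U. U \<subseteq> V \<and> card U = m \<and> A \<subseteq> U} = card {B. B \<subseteq> V - A \<and> card B = m - card A}"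
    unfolding eq by (rule card_image[OF inj])
  also have "\<dots> = card (V - A) choose (m - card A)" using assms(1) by (intro n_subsets) simp
  also have "card (V - A) = card V - card A" using assms(2) fA by (simp add: card_Diff_subset)
  finally show ?thesis .
qed

lemma card_restr_subsets:
  assumes "finite E" "B \<subseteq> E \<inter> A"
  shows "card {X. X \<subseteq> E \<and> X \<inter> A = B} = 2 ^ card (E - A)"
proof -
  have eq: "{X. X \<subseteq> E \<and> X \<inter> A = B} = (\<lambda>Y. Y \<union> B) ` Pow (E - A)"
  proof (rule set_eqI, rule iffI)
    fix X assume "X \<in> {X. X \<subseteq> E \<and> X \<inter> A = B}"
    then have "X = (X - A) \<union> B" "X - A \<in> Pow (E - A)" by auto
    then show "X \<in> (\<lambda>Y. Y \<union> B) ` Pow (E - A)" by blast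
  qed (use assms in auto)
  have inj: "inj_on (\<lambda>Y. Y \<union> B) (Pow (E - A))"
    apply (rule inj_onI) using assms by blast
  show ?thesis using eq inj card_image card_Pow assms
    by (metis finite_Diff)
qed

lemma hic_transport:
  assumes "bij_betw g W W'" "\<forall>a\<in>W. \<forall>b\<in>W. {a,b} \<in> H \<longleftrightarrow> {g a, g b} \<in> H'"
    "has_induced_copy VF EF W' H'"
  shows "has_induced_copy VF EF W H"
proof -
  obtain f where f: "inj_on f VF" "f ` VF \<subseteq> W'" "\<forall>x\<in>VF. \<forall>y\<in>VF. {x, y} \<in> EF \<longleftrightarrow> {f x, f y} \<in> H'"
    using assms(3) unfolding has_induced_copy_def by blast
  define h where "h = inv_into W g"
  have hb: "bij_betw h W' W" using assms(1) h_def bij_betw_inv_into by blast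
  have gh: "\<And>z. z \<in> W' \<Longrightarrow> g (h z) = z" using assms(1) h_def
    by (simp add: bij_betw_inv_into_right)
  have "inj_on (h \<circ> f) VF"
    using f hb by (meson bij_betw_def comp_inj_on inj_on_subset)
  moreover have "(h \<circ> f) ` VF \<subseteq> W" using f hb bij_betw_imp_surj_on by fastforce
  moreover have "\<forall>x\<in>VF. \<forall>y\<in>VF. {x, y} \<in> EF \<longleftrightarrow> {(h \<circ> f) x, (h \<circ> f) y} \<in> H"
  proof (intro ballI)
    fix x y assume xy: "x \<in> VF" "y \<in> VF"
    have in1: "h (f x) \<in> W" "h (f y) \<in> W" using xy f hb bij_betw_imp_surj_on by fastforce+
    have "{(h \<circ> f) x, (h \<circ> f) y} \<in> H \<longleftrightarrow> {g (h (f x)), g (h (f y))} \<in> H'"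
      using assms(2) in1 by simp
    also have "\<dots> \<longleftrightarrow> {f x, f y} \<in> H'"
    proof -
      have "f x \<in> W'" "f y \<in> W'" using xy f by auto
      then show ?thesis using gh by simp
    qed
    finally show "{x, y} \<in> EF \<longleftrightarrow> {(h \<circ> f) x, (h \<circ> f) y} \<in> H" using f xy by simp
  qed
  ultimately show ?thesis unfolding has_induced_copy_def by blast
qed



lemma pairs_Pow: "pairs W \<subseteq> Pow W" unfolding pairs_def by auto

lemma adm_le:
  assumes fW: "finite W" and E1: "E' \<subseteq> pairs W" and E0: "E0' \<subseteq> pairs W" and dis: "E' \<inter> E0' = {}"
    and noc: "\<forall>X. X \<subseteq> E' \<longrightarrow> \<not> has_induced_copy VF EF W (E0' \<union> X)"
  shows "card E' \<le> exstar (card W) VF EF"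
proof -
  define n where "n = card W"
  obtain g where g: "bij_betw g W {..<n}"
    using ex_bij_betw_finite_nat[OF fW] n_def by (metis atLeast0LessThan)
  define Im where "Im = image (image g)"
  have injg: "inj_on g W" using g bij_betw_def by blast
  have injIm: "inj_on (image g) (Pow W)" using inj_on_image_Pow[OF injg] .
  have PW1: "E' \<subseteq> Pow W" and PW0: "E0' \<subseteq> Pow W" using E1 E0 pairs_Pow by blast+
  have pp: "g ` e \<in> pairs {..<n}" if "e \<in> pairs W" for e
  proof -
    have "e \<subseteq> W" "card e = 2" using that unfolding pairs_def by auto
    moreover have "inj_on g e" using injg \<open>e \<subseteq> W\<close> inj_on_subset by blast
    moreover have "g ` e \<subseteq> {..<n}" using g \<open>e \<subseteq> W\<close> bij_betw_imp_surj_on by blast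
    ultimately show ?thesis unfolding pairs_def
      by (auto simp: card_image)
  qed
  define E'' where "E'' = Im E'"
  define E0'' where "E0'' = Im E0'"
  have c: "card E'' = card E'" unfolding E''_def Im_def
    using card_image inj_on_subset[OF injIm PW1] by blast
  have s1: "E'' \<subseteq> pairs {..<n}" unfolding E''_def Im_def using E1 pp by blast
  have s0: "E0'' \<subseteq> pairs {..<n}" unfolding E0''_def Im_def using E0 pp by blast
  have d: "E'' \<inter> E0'' = {}" unfolding E''_def E0''_def Im_def
    using inj_on_image_Int[OF injIm PW1 PW0] dis by simp
  have nc: "\<forall>X. X \<subseteq> E'' \<longrightarrow> \<not> has_induced_copy VF EF {..<n} (E0'' \<union> X)"
  proof (intro allI impI notI)
    fix X assume X: "X \<subseteq> E''" and hc: "has_induced_copy VF EF {..<n} (E0'' \<union> X)"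
    define X' where "X' = {e\<in>E'. g ` e \<in> X}"
    have IX: "Im X' = X" using X unfolding X'_def E''_def Im_def by blast
    have X'sub: "X' \<subseteq> E'" unfolding X'_def by blast
    have HP: "E0' \<union> X' \<subseteq> Pow W" using PW0 PW1 X'sub by blast
    have "has_induced_copy VF EF W (E0' \<union> X')"
    proof (rule hic_transport[OF g _ hc], intro ballI)
      fix a b assume ab: "a \<in> W" "b \<in> W"
      have abP: "{a,b} \<in> Pow W" using ab by auto
      have "{a,b} \<in> E0' \<union> X' \<longleftrightarrow> g ` {a,b} \<in> image g ` (E0' \<union> X')"
        using inj_on_image_mem_iff[OF injIm abP HP] by simp
      also have "image g ` (E0' \<union> X') = E0'' \<union> X" using IX unfolding E0''_def Im_def by auto
      finally show "{a,b} \<in> E0' \<union> X' \<longleftrightarrow> {g a, g b} \<in> E0'' \<union> X" by simp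
    qed
    then show False using noc X'sub by blast
  qed
  define S where "S = {card E |E. E \<subseteq> pairs {..<n} \<and>
      (\<exists>E0. E0 \<subseteq> pairs {..<n} \<and> E \<inter> E0 = {} \<and>
         (\<forall>X. X \<subseteq> E \<longrightarrow> \<not> has_induced_copy VF EF {..<n} (E0 \<union> X)))}"
  have "card E'' \<in> S" unfolding S_def using s1 s0 d nc by blast
  moreover have "finite S"
  proof -
    have "S \<subseteq> card ` Pow (pairs {..<n})" unfolding S_def by blast
    moreover have "finite (pairs {..<n})" unfolding pairs_def by simp
    ultimately show ?thesis using finite_subset by blast
  qed
  ultimately have "card E'' \<le> Max S" by simp
  then show ?thesis using c unfolding exstar_def S_def n_def by simp
qed

lemma copy_restrict:
  assumes hc: "has_induced_copy VF EF U H" and UV: "U \<subseteq> V" and H'V: "H' \<subseteq> pairs V"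
    and EFp: "EF \<subseteq> pairs VF" and HH: "H' \<inter> pairs U = H \<inter> pairs U"
  shows "\<exists>S. S \<subseteq> U \<and> S \<in> induced_copies VF EF V H'"
proof -
  obtain f where f: "inj_on f VF" "f ` VF \<subseteq> U" "\<forall>x\<in>VF. \<forall>y\<in>VF. {x, y} \<in> EF \<longleftrightarrow> {f x, f y} \<in> H"
    using hc unfolding has_induced_copy_def by blast
  have "\<forall>x\<in>VF. \<forall>y\<in>VF. {x, y} \<in> EF \<longleftrightarrow> {f x, f y} \<in> H'"
  proof (intro ballI)
    fix x y assume xy: "x \<in> VF" "y \<in> VF"
    show "{x, y} \<in> EF \<longleftrightarrow> {f x, f y} \<in> H'"
    proof (cases "x = y")
      case True
      have "{x} \<notin> EF" using EFp unfolding pairs_def by auto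
      moreover have "{f x} \<notin> H'" using H'V unfolding pairs_def by auto
      ultimately show ?thesis using True by simp
    next
      case False
      then have "f x \<noteq> f y" using f(1) xy inj_on_def by metis
      then have "{f x, f y} \<in> pairs U" using f(2) xy unfolding pairs_def by auto
      then have "{f x, f y} \<in> H' \<longleftrightarrow> {f x, f y} \<in> H" using HH by blast
      then show ?thesis using f(3) xy by simp
    qed
  qed
  moreover have "bij_betw f VF (f ` VF)" using f(1) inj_on_imp_bij_betw by blast
  ultimately have "f ` VF \<in> induced_copies VF EF V H'" using f(2) UV unfolding induced_copies_def by blast
  then show ?thesis using f(2) by blast
qed



lemma card_filter_sum: "finite A \<Longrightarrow> card {a\<in>A. P a} = (\<Sum>a\<in>A. if P a then 1 else 0 :: nat)"
  by (simp add: sum.inter_filter[symmetric])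

lemma double_count:
  assumes "finite A" "finite B"
  shows "(\<Sum>a\<in>A. card {b\<in>B. P a b}) = (\<Sum>b\<in>B. card {a\<in>A. P a b})"
proof -
  have "(\<Sum>a\<in>A. card {b\<in>B. P a b}) = (\<Sum>a\<in>A. \<Sum>b\<in>B. if P a b then 1 else 0 :: nat)"
    using assms by (simp add: card_filter_sum)
  also have "\<dots> = (\<Sum>b\<in>B. \<Sum>a\<in>A. if P a b then 1 else 0 :: nat)" by (rule sum.swap)
  also have "\<dots> = (\<Sum>b\<in>B. card {a\<in>A. P a b})"
    using assms by (simp add: card_filter_sum)
  finally show ?thesis .
qed

lemma pow_le_choose: "k \<le> n \<Longrightarrow> real n ^ k \<le> real (n choose k) * real k ^ k"
proof (cases "k = 0")
  case True then show ?thesis by simp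
next
  case False
  assume kn: "k \<le> n"
  have "(real n / real k) ^ k \<le> real (n choose k)" using binomial_ge_n_over_k_pow_k[OF kn] by simp
  moreover have "real k ^ k > 0" using False by simp
  ultimately show ?thesis by (simp add: power_divide divide_le_eq)
qed

lemma sum_edges:
  assumes fV: "finite V" and EV: "E \<subseteq> pairs V" and m2: "2 \<le> m"
  shows "(\<Sum>U\<in>{U. U \<subseteq> V \<and> card U = m}. card (E \<inter> pairs U)) = card E * ((card V - 2) choose (m - 2))"
proof -
  define UU where "UU = {U. U \<subseteq> V \<and> card U = m}"
  have fUU: "finite UU" unfolding UU_def using fV by simp
  have fE: "finite E" 
  proof -
    have "E \<subseteq> Pow V" using EV pairs_Pow by blast
    then show ?thesis using fV finite_subset by blast
  qed
  have "(\<Sum>U\<in>UU. card (E \<inter> pairs U)) = (\<Sum>U\<in>UU. card {e\<in>E. e \<subseteq> U})"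
  proof (rule sum.cong)
    fix U assume "U \<in> UU"
    show "card (E \<inter> pairs U) = card {e\<in>E. e \<subseteq> U}"
      using EV unfolding pairs_def by (intro arg_cong[where f=card]) auto
  qed simp
  also have "\<dots> = (\<Sum>e\<in>E. card {U\<in>UU. e \<subseteq> U})" using double_count[OF fUU fE] .
  also have "\<dots> = (\<Sum>e\<in>E. (card V - 2) choose (m - 2))"
  proof (rule sum.cong)
    fix e assume e: "e \<in> E"
    then have e2: "e \<subseteq> V" "card e = 2" using EV unfolding pairs_def by auto
    have "{U\<in>UU. e \<subseteq> U} = {U. U \<subseteq> V \<and> card U = m \<and> e \<subseteq> U}" unfolding UU_def by auto
    then show "card {U\<in>UU. e \<subseteq> U} = (card V - 2) choose (m - 2)"
      using card_supersets[OF fV e2(1)] e2 m2 by simp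
  qed simp
  finally show ?thesis unfolding UU_def by simp
qed



theorem corollary3:
  fixes VF :: "'b set" and EF :: "'b set set" and \<epsilon> :: real
  assumes "finite VF" and "EF \<subseteq> pairs VF" and "\<epsilon> > 0"
  shows "\<exists>n0::nat. \<exists>\<delta>::real. \<delta> > 0 \<and>
    (\<forall>(V::nat set) E. finite V \<and> card V > n0 \<and> E \<subseteq> pairs V \<and>
       real (card E) = real (exstar (card V) VF EF) + \<epsilon> * real (card V choose 2) \<longrightarrow>
       (\<forall>E0. E0 \<subseteq> pairs V - E \<longrightarrow>
          (\<exists>X. X \<subseteq> E \<and>
             real (card (induced_copies VF EF V (E0 \<union> X))) \<ge> \<delta> * real (card V) ^ card VF)))"
proof -
  let ?k = "card VF"
  define K0 where "K0 = max 2 ?k"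
  define a where "a = (\<lambda>n. real (exstar n VF EF) / real (n choose 2))"
  define L where "L = Inf (a ` {K0..})"
  have ne: "a ` {K0..} \<noteq> {}" by auto
  have bdd: "bdd_below (a ` {K0..})" unfolding a_def by (intro bdd_belowI[where m=0]) auto
  have "Inf (a ` {K0..}) < L + \<epsilon>/2" using assms(3) L_def by simp
  then obtain m where m: "m \<ge> K0" "a m < L + \<epsilon>/2" using cInf_lessD[OF ne] by auto
  have Lle: "\<And>n. n \<ge> K0 \<Longrightarrow> L \<le> a n" unfolding L_def using bdd by (auto intro: cInf_lower)
  have m2: "2 \<le> m" and km: "?k \<le> m" using m(1) K0_def by auto
  define Cm where "Cm = m choose 2"
  have Cm0: "Cm > 0" using m2 Cm_def by simp
  have kk: "real ?k ^ ?k > 0" by (cases ?k) auto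
  have mk0: "m choose ?k > 0" using km by simp
  define D where "D = 2 ^ Cm * real (m choose ?k) * real ?k ^ ?k"
  have D0: "D > 0" unfolding D_def using kk mk0 by simp
  define \<delta> where "\<delta> = \<epsilon> / 2 / D"
  have d0: "\<delta> > 0" unfolding \<delta>_def using D0 assms(3) by simp
  have amCm: "a m * real Cm = real (exstar m VF EF)" unfolding a_def Cm_def using Cm0 Cm_def by simp
  show ?thesis
  proof (intro exI[of _ m] exI[of _ \<delta>] conjI allI impI)
    show "\<delta> > 0" by (rule d0)
    fix V :: "nat set" and E E0
    assume H: "finite V \<and> m < card V \<and> E \<subseteq> pairs V \<and>
       real (card E) = real (exstar (card V) VF EF) + \<epsilon> * real (card V choose 2)"
    assume E0: "E0 \<subseteq> pairs V - E"
    define n where "n = card V"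
    have fV: "finite V" and mn: "m < n" and EV: "E \<subseteq> pairs V"
      and cardE: "real (card E) = real (exstar n VF EF) + \<epsilon> * real (n choose 2)"
      using H n_def by auto
    show "\<exists>X. X \<subseteq> E \<and> real (card (induced_copies VF EF V (E0 \<union> X))) \<ge> \<delta> * real (card V) ^ ?k"
    proof (rule ccontr)
      assume neg: "\<not> ?thesis"
      have negX: "real (card (induced_copies VF EF V (E0 \<union> X))) < \<delta> * real n ^ ?k" if "X \<subseteq> E" for X
      proof -
        have "\<not> (\<delta> * real n ^ ?k \<le> real (card (induced_copies VF EF V (E0 \<union> X))))"
          using neg that n_def by blast
        then show ?thesis by (simp only: not_le)
      qed
      have n2: "n choose 2 > 0" using mn m2 by simp
      have Kn: "K0 \<le> n" using m mn by simp
      have "a m - \<epsilon>/2 < a n" using Lle[OF Kn] m(2) by simp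
      then have "(a m - \<epsilon>/2) * real (n choose 2) \<le> a n * real (n choose 2)"
        using n2 by (intro mult_right_mono) auto
      also have "a n * real (n choose 2) = real (exstar n VF EF)" unfolding a_def using n2 by simp
      finally have cE: "(a m + \<epsilon>/2) * real (n choose 2) \<le> real (card E)"
        using cardE by (simp add: algebra_simps)
      define UU where "UU = {U. U \<subseteq> V \<and> card U = m}"
      have fUU: "finite UU" unfolding UU_def using fV by simp
      have cUU: "card UU = n choose m" unfolding UU_def n_def using fV by (simp add: n_subsets)
      have sumE: "(\<Sum>U\<in>UU. card (E \<inter> pairs U)) = card E * ((n - 2) choose (m - 2))"
        unfolding UU_def n_def using sum_edges[OF fV EV m2] .
      have cm: "(n choose m) * Cm = (n choose 2) * ((n - 2) choose (m - 2))"
        unfolding Cm_def using choose_mult[OF m2, of n] mn by simp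
      have low: "(real (exstar m VF EF) + \<epsilon>/2 * real Cm) * real (n choose m)
          \<le> real (\<Sum>U\<in>UU. card (E \<inter> pairs U))"
      proof -
        have "(real (exstar m VF EF) + \<epsilon>/2 * real Cm) * real (n choose m)
            = (a m + \<epsilon>/2) * (real (n choose m) * real Cm)" using amCm by (simp add: algebra_simps)
        also have "\<dots> = (a m + \<epsilon>/2) * real (n choose 2) * real ((n - 2) choose (m - 2))"
          using arg_cong[OF cm, of real] by (simp add: algebra_simps)
        also have "\<dots> \<le> real (card E) * real ((n - 2) choose (m - 2))"
          using cE by (intro mult_right_mono) auto
        also have "\<dots> = real (\<Sum>U\<in>UU. card (E \<inter> pairs U))" using sumE by simp
        finally show ?thesis .
      qed
      define G where "G = {U\<in>UU. exstar m VF EF < card (E \<inter> pairs U)}"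
      have fG: "finite G" unfolding G_def using fUU by simp
      have GUU: "G \<subseteq> UU" unfolding G_def by auto
      have cpU: "\<And>U. U \<in> UU \<Longrightarrow> card (E \<inter> pairs U) \<le> Cm"
      proof -
        fix U assume U: "U \<in> UU"
        then have fU: "finite U" "card U = m" unfolding UU_def using fV finite_subset by auto
        have "finite (pairs U)" using fU pairs_Pow by (meson finite_Pow_iff finite_subset)
        then have "card (E \<inter> pairs U) \<le> card (pairs U)" by (intro card_mono) auto
        also have "\<dots> = Cm" using card_pairs[OF fU(1)] fU Cm_def by simp
        finally show "card (E \<inter> pairs U) \<le> Cm" .
      qed
      have up: "(\<Sum>U\<in>UU. card (E \<inter> pairs U)) \<le> card UU * exstar m VF EF + card G * Cm"
      proof -
        have "(\<Sum>U\<in>UU. card (E \<inter> pairs U)) \<le> (\<Sum>U\<in>UU. exstar m VF EF +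
              (if exstar m VF EF < card (E \<inter> pairs U) then Cm else 0))"
          using cpU by (intro sum_mono) (force simp: not_less trans_le_add2)
        also have "\<dots> = card UU * exstar m VF EF + (\<Sum>U\<in>G. Cm)"
        proof -
          have "(\<Sum>U\<in>UU. (if exstar m VF EF < card (E \<inter> pairs U) then Cm else 0)) = (\<Sum>U\<in>G. Cm)"
            unfolding G_def using fUU by (rule sum.inter_filter[symmetric])
          then show ?thesis by (simp add: sum.distrib)
        qed
        finally show ?thesis by simp
      qed
      have Gbig: "\<epsilon>/2 * real (n choose m) \<le> real (card G)"
      proof -
        have "(real (exstar m VF EF) + \<epsilon>/2 * real Cm) * real (n choose m)
             \<le> real (n choose m) * real (exstar m VF EF) + real (card G) * real Cm"
        proof -
          have "real (\<Sum>U\<in>UU. card (E \<inter> pairs U)) \<le> real (card UU * exstar m VF EF + card G * Cm)"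
            using up by (simp only: of_nat_le_iff)
          also have "\<dots> = real (n choose m) * real (exstar m VF EF) + real (card G) * real Cm"
            using cUU by simp
          finally show ?thesis using low by linarith
        qed
        then have "(\<epsilon>/2 * real (n choose m)) * real Cm \<le> real (card G) * real Cm"
          by (simp add: algebra_simps)
        then show ?thesis using Cm0 by simp
      qed
      have fE: "finite E"
      proof -
        have "E \<subseteq> Pow V" using EV pairs_Pow by blast
        then show ?thesis using fV finite_subset by blast
      qed
      have E0V: "E0 \<subseteq> pairs V" and E0E: "E0 \<inter> E = {}" using E0 by auto
      have exX: "\<forall>U\<in>G. \<exists>XU. XU \<subseteq> E \<inter> pairs U \<and> has_induced_copy VF EF U (E0 \<inter> pairs U \<union> XU)"
      proof
        fix U assume U: "U \<in> G"
        then have UV: "U \<subseteq> V" "card U = m" unfolding G_def UU_def by auto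
        have fU: "finite U" using UV fV finite_subset by blast
        show "\<exists>XU. XU \<subseteq> E \<inter> pairs U \<and> has_induced_copy VF EF U (E0 \<inter> pairs U \<union> XU)"
        proof (rule ccontr)
          assume "\<not> ?thesis"
          then have "\<forall>X. X \<subseteq> E \<inter> pairs U \<longrightarrow> \<not> has_induced_copy VF EF U (E0 \<inter> pairs U \<union> X)" by blast
          then have "card (E \<inter> pairs U) \<le> exstar (card U) VF EF"
            using adm_le[OF fU, of "E \<inter> pairs U" "E0 \<inter> pairs U"] E0E by blast
          then show False using U UV unfolding G_def by simp
        qed
      qed
      then obtain Xf where Xf: "\<And>U. U \<in> G \<Longrightarrow> Xf U \<subseteq> E \<inter> pairs U \<and> has_induced_copy VF EF U (E0 \<inter> pairs U \<union> Xf U)"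
        by metis
      define N where "N = (\<lambda>X. card (induced_copies VF EF V (E0 \<union> X)))"
      define C' where "C' = (n - ?k) choose (m - ?k)"
      have C'0: "C' > 0" unfolding C'_def using km mn by simp
      have fPE: "finite (Pow E)" using fE by simp
      have lhs: "card G * 2 ^ card E \<le> 2 ^ Cm * (\<Sum>X\<in>Pow E. card {U\<in>G. X \<inter> pairs U = Xf U})"
      proof -
        have "card G * 2 ^ card E = (\<Sum>U\<in>G. 2 ^ card E)" by simp
        also have "\<dots> \<le> (\<Sum>U\<in>G. card {X\<in>Pow E. X \<inter> pairs U = Xf U} * 2 ^ Cm)"
        proof (rule sum_mono)
          fix U assume U: "U \<in> G"
          then have UV: "U \<subseteq> V" "card U = m" unfolding G_def UU_def by auto
          have fU: "finite U" using UV fV finite_subset by blast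
          have "{X\<in>Pow E. X \<inter> pairs U = Xf U} = {X. X \<subseteq> E \<and> X \<inter> pairs U = Xf U}" by auto
          then have c1: "card {X\<in>Pow E. X \<inter> pairs U = Xf U} = 2 ^ card (E - pairs U)"
            using card_restr_subsets[OF fE, of "Xf U" "pairs U"] Xf[OF U] by simp
          have "card (E \<inter> pairs U) \<le> Cm" using cpU U GUU by blast
          then have "card E \<le> card (E - pairs U) + Cm" using card_Int_Diff[OF fE, of "pairs U"] by simp
          then have "(2::nat) ^ card E \<le> 2 ^ (card (E - pairs U) + Cm)" by (intro power_increasing) auto
          then show "2 ^ card E \<le> card {X\<in>Pow E. X \<inter> pairs U = Xf U} * 2 ^ Cm"
            using c1 by (simp add: power_add)
        qed
        also have "\<dots> = (\<Sum>U\<in>G. card {X\<in>Pow E. X \<inter> pairs U = Xf U}) * 2 ^ Cm"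
          by (simp add: sum_distrib_right)
        also have "(\<Sum>U\<in>G. card {X\<in>Pow E. X \<inter> pairs U = Xf U}) = (\<Sum>X\<in>Pow E. card {U\<in>G. X \<inter> pairs U = Xf U})"
          using double_count[OF fG fPE, of "\<lambda>U X. X \<inter> pairs U = Xf U"] by simp
        finally show ?thesis by (simp add: mult.commute)
      qed
      have perX: "card {U\<in>G. X \<inter> pairs U = Xf U} \<le> N X * C'" if X: "X \<in> Pow E" for X
      proof -
        define IC where "IC = induced_copies VF EF V (E0 \<union> X)"
        have fIC: "finite IC"
        proof -
          have "IC \<subseteq> Pow V" unfolding IC_def induced_copies_def by auto
          then show ?thesis using fV finite_subset by blast
        qed
        have sub: "{U\<in>G. X \<inter> pairs U = Xf U} \<subseteq> (\<Union>S\<in>IC. {U. U \<subseteq> V \<and> card U = m \<and> S \<subseteq> U})"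
        proof
          fix U assume "U \<in> {U\<in>G. X \<inter> pairs U = Xf U}"
          then have U: "U \<in> G" "X \<inter> pairs U = Xf U" by auto
          then have UV: "U \<subseteq> V" "card U = m" unfolding G_def UU_def by auto
          have H'V: "E0 \<union> X \<subseteq> pairs V" using E0V X EV by auto
          have "(E0 \<union> X) \<inter> pairs U = (E0 \<inter> pairs U \<union> Xf U) \<inter> pairs U" using U Xf[OF U(1)] by auto
          then obtain S where "S \<subseteq> U" "S \<in> IC"
            using copy_restrict[OF conjunct2[OF Xf[OF U(1)]] UV(1) H'V assms(2)] unfolding IC_def by blast
          then show "U \<in> (\<Union>S\<in>IC. {U. U \<subseteq> V \<and> card U = m \<and> S \<subseteq> U})" using UV by blast
        qed
        have "card {U\<in>G. X \<inter> pairs U = Xf U} \<le> card (\<Union>S\<in>IC. {U. U \<subseteq> V \<and> card U = m \<and> S \<subseteq> U})"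
        proof (rule card_mono[OF _ sub])
          have "(\<Union>S\<in>IC. {U. U \<subseteq> V \<and> card U = m \<and> S \<subseteq> U}) \<subseteq> Pow V" by auto
          then show "finite (\<Union>S\<in>IC. {U. U \<subseteq> V \<and> card U = m \<and> S \<subseteq> U})"
            using fV finite_subset by blast
        qed
        also have "\<dots> \<le> (\<Sum>S\<in>IC. card {U. U \<subseteq> V \<and> card U = m \<and> S \<subseteq> U})" by (rule card_UN_le[OF fIC])
        also have "\<dots> = (\<Sum>S\<in>IC. C')"
        proof (rule sum.cong)
          fix S assume S: "S \<in> IC"
          then obtain f where "S \<subseteq> V" "bij_betw f VF S" unfolding IC_def induced_copies_def by blast
          then have SV: "S \<subseteq> V" "card S = ?k" using bij_betw_same_card by metis+
          show "card {U. U \<subseteq> V \<and> card U = m \<and> S \<subseteq> U} = C'"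
            using card_supersets[OF fV SV(1)] SV km unfolding C'_def n_def by simp
        qed simp
        also have "\<dots> = N X * C'" unfolding IC_def N_def by simp
        finally show ?thesis .
      qed
      have PEne: "Pow E \<noteq> {}" by auto
      have sumN: "(\<Sum>X\<in>Pow E. real (N X)) < (\<Sum>X\<in>Pow E. \<delta> * real n ^ ?k)"
        using negX unfolding N_def by (intro sum_strict_mono[OF fPE PEne]) auto
      have sumN2: "(\<Sum>X\<in>Pow E. \<delta> * real n ^ ?k) = 2 ^ card E * (\<delta> * real n ^ ?k)"
        using card_Pow[OF fE] by simp
      have chain: "card G * 2 ^ card E \<le> 2 ^ Cm * C' * (\<Sum>X\<in>Pow E. N X)"
      proof -
        have "(\<Sum>X\<in>Pow E. card {U\<in>G. X \<inter> pairs U = Xf U}) \<le> (\<Sum>X\<in>Pow E. N X * C')"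
          using perX by (intro sum_mono) auto
        then have "2 ^ Cm * (\<Sum>X\<in>Pow E. card {U\<in>G. X \<inter> pairs U = Xf U}) \<le> 2 ^ Cm * (\<Sum>X\<in>Pow E. N X * C')"
          by simp
        moreover have "(\<Sum>X\<in>Pow E. N X * C') = (\<Sum>X\<in>Pow E. N X) * C'"
          by (simp add: sum_distrib_right)
        ultimately have "2 ^ Cm * (\<Sum>X\<in>Pow E. card {U\<in>G. X \<inter> pairs U = Xf U}) \<le> 2 ^ Cm * C' * (\<Sum>X\<in>Pow E. N X)"
          by (simp add: mult_ac)
        then show ?thesis using lhs by linarith
      qed
      have "real (card G) * 2 ^ card E \<le> 2 ^ Cm * real C' * (\<Sum>X\<in>Pow E. real (N X))"
      proof -
        have "real (card G * 2 ^ card E) \<le> real (2 ^ Cm * C' * (\<Sum>X\<in>Pow E. N X))"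
          using chain by (simp only: of_nat_le_iff)
        then show ?thesis by simp
      qed
      also have "\<dots> < 2 ^ Cm * real C' * (2 ^ card E * (\<delta> * real n ^ ?k))"
      proof -
        have sumN3: "(\<Sum>X\<in>Pow E. real (N X)) < 2 ^ card E * (\<delta> * real n ^ ?k)"
          using sumN unfolding sumN2 .
        have "(0::real) < 2 ^ Cm * real C'" using C'0 by simp
        from mult_strict_left_mono[OF sumN3 this] show ?thesis .
      qed
      finally have "real (card G) * 2 ^ card E < (2 ^ Cm * real C' * \<delta> * real n ^ ?k) * 2 ^ card E"
        by (simp add: algebra_simps)
      then have Gs: "real (card G) < 2 ^ Cm * real C' * \<delta> * real n ^ ?k"
        by (simp only: mult_less_cancel_right) simp
      have "\<epsilon>/2 * real (n choose m) < \<epsilon>/2 * (2 ^ Cm * real C' * real n ^ ?k / D)"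
      proof -
        have "2 ^ Cm * real C' * \<delta> * real n ^ ?k = \<epsilon>/2 * (2 ^ Cm * real C' * real n ^ ?k / D)"
          unfolding \<delta>_def by simp
        then show ?thesis using Gbig Gs by linarith
      qed
      then have "real (n choose m) < 2 ^ Cm * real C' * real n ^ ?k / D"
        by (rule mult_left_less_imp_less) (use assms(3) in simp)
      then have "real (n choose m) * D < 2 ^ Cm * real C' * real n ^ ?k"
        using D0 by (simp add: less_divide_eq)
      then have lt: "real (n choose m) * real (m choose ?k) * real ?k ^ ?k < real C' * real n ^ ?k"
        unfolding D_def by (simp add: algebra_simps)
      have cmk: "(n choose m) * (m choose ?k) = (n choose ?k) * C'"
        unfolding C'_def using choose_mult[OF km, of n] mn by simp
      have kn: "?k \<le> n" using km mn by simp
      have "real C' * real n ^ ?k \<le> real C' * (real (n choose ?k) * real ?k ^ ?k)"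
        using pow_le_choose[OF kn] by (intro mult_left_mono) auto
      also have "\<dots> = real (n choose m) * real (m choose ?k) * real ?k ^ ?k"
        using arg_cong[OF cmk, of real] by (simp add: algebra_simps)
      finally show False using lt by simp
    qed
  qed
qed

end
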